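(* $\mathsf{AP}(R_3,R_3)=\operatorname{Pol}(R_3,R'_3)=\mathsf{I}$.
   Context: Tuples in $\{0,1\}^4$ are written as strings $abcd$. The relations $R_1,\dots,R_5\subseteq\{0,1\}^4$ are $R_1=\{0000,1000,0100,1100,1010,0110,1001,0101,0011,1011,0111,1111\}$, $R_2=\{0000,1000,0100,1100,1010,0101,0011,1111\}$, $R_3=\{0000,1100,1010,0101,0011,1011,0111,1111\}$, $R_4=\{0000,1100,1010,0101,0011,1111\}$, $R_5=\{0000,1100,1010,0110,1001,0101,0011,1111\}$. For $R,S\subseteq\{0,1\}^4$, a Boolean function $f\colon\{0,1\}^n\to\{0,1\}$ is analogy-preserving relative to $(R,S)$ if for all $\mathbf{a},\mathbf{b},\mathbf{c},\mathbf{d}\in\{0,1\}^n$ with $(a_i,b_i,c_i,d_i)\in R$ for every $i$ and such that $(f(\mathbf{a}),f(\mathbf{b}),f(\mathbf{c}),x)\in S$ for some $x\in\{0,1\}$, we have $(f(\mathbf{a}),f(\mathbf{b}),f(\mathbf{c}),f(\mathbf{d}))\in S$; $\mathsf{AP}(R,S)$ is the set of all such functions of all arities. $S':=S\cup\{(a,b,c,d)\mid\nexists x\colon(a,b,c,x)\in S\}$, and $\operatorname{Pol}(R,S)$ is the set of Boolean functions $f$ with $f(\mathbf{a}_1,\dots,\mathbf{a}_n)\in S$ (componentwise) for all $\mathbf{a}_1,\dots,\mathbf{a}_n\in R$. $\mathsf{I}$ is the set of all Boolean functions (of all arities) that are constant or a projection. *)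

theory Defs
  imports Main
begin

text \<open>Tuples in {0,1}^4 are 4-tuples of booleans (0 = False, 1 = True).
An n-ary Boolean function is represented by f :: bool list => bool,
of which only the values on lists of length n matter.\<close>

type_synonym tup4 = "bool \<times> bool \<times> bool \<times> bool"

definition b4 :: "nat \<Rightarrow> nat \<Rightarrow> nat \<Rightarrow> nat \<Rightarrow> tup4" where
  "b4 a b c d = (a \<noteq> 0, b \<noteq> 0, c \<noteq> 0, d \<noteq> 0)"

definition R3 :: "tup4 set" where
  "R3 = {b4 0 0 0 0, b4 1 1 0 0, b4 1 0 1 0, b4 0 1 0 1, b4 0 0 1 1,
         b4 1 0 1 1, b4 0 1 1 1, b4 1 1 1 1}"

definition prime_rel :: "tup4 set \<Rightarrow> tup4 set" where
  "prime_rel S = S \<union> {(a, b, c, d). \<not> (\<exists>x. (a, b, c, x) \<in> S)}"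

definition AP :: "nat \<Rightarrow> tup4 set \<Rightarrow> tup4 set \<Rightarrow> (bool list \<Rightarrow> bool) \<Rightarrow> bool" where
  "AP n R S f \<longleftrightarrow>
    (\<forall>a b c d. length a = n \<and> length b = n \<and> length c = n \<and> length d = n \<and>
       (\<forall>i<n. (a ! i, b ! i, c ! i, d ! i) \<in> R) \<and>
       (\<exists>x. (f a, f b, f c, x) \<in> S)
       \<longrightarrow> (f a, f b, f c, f d) \<in> S)"

definition Pol :: "nat \<Rightarrow> tup4 set \<Rightarrow> tup4 set \<Rightarrow> (bool list \<Rightarrow> bool) \<Rightarrow> bool" where
  "Pol n R S f \<longleftrightarrow>
    (\<forall>t :: nat \<Rightarrow> tup4. (\<forall>i<n. t i \<in> R) \<longrightarrow>
       (f (map (\<lambda>i. fst (t i)) [0..<n]),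
        f (map (\<lambda>i. fst (snd (t i))) [0..<n]),
        f (map (\<lambda>i. fst (snd (snd (t i)))) [0..<n]),
        f (map (\<lambda>i. snd (snd (snd (t i)))) [0..<n])) \<in> S)"

definition in_I :: "nat \<Rightarrow> (bool list \<Rightarrow> bool) \<Rightarrow> bool" where
  "in_I n f \<longleftrightarrow>
    (\<exists>v. \<forall>x. length x = n \<longrightarrow> f x = v) \<or>
    (\<exists>i<n. \<forall>x. length x = n \<longrightarrow> f x = x ! i)"

end

theory Submission
  imports Defs
begin

lemma R3'_iff: "((p,q,r,s) \<in> prime_rel R3) \<longleftrightarrow>
   (p,q,r,s) \<notin> {(False,False,False,True),(False,False,True,False),(False,True,False,False),
                    (False,True,True,False),(True,True,False,True),(True,True,True,False)}"
  by (cases p; cases q; cases r; cases s) (auto simp: prime_rel_def R3_def b4_def)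

lemma R3_iff: "((p,q,r,s) \<in> R3) \<longleftrightarrow>
   (p,q,r,s) \<in> {(False,False,False,False),(True,True,False,False),(True,False,True,False),
     (False,True,False,True),(False,False,True,True),(True,False,True,True),(False,True,True,True),
     (True,True,True,True)}"
  by (cases p; cases q; cases r; cases s) (auto simp: R3_def b4_def)

lemma polD:
  assumes "Pol n R S f" "length a = n" "length b = n" "length c = n" "length d = n"
    "\<forall>i<n. (a!i, b!i, c!i, d!i) \<in> R"
  shows "(f a, f b, f c, f d) \<in> S"
proof -
  define t where "t i = (a!i, b!i, c!i, d!i)" for i
  have m: "map (\<lambda>i. fst (t i)) [0..<n] = a" "map (\<lambda>i. fst (snd (t i))) [0..<n] = b"
     "map (\<lambda>i. fst (snd (snd (t i)))) [0..<n] = c" "map (\<lambda>i. snd (snd (snd (t i)))) [0..<n] = d"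
    using assms(2-5) by (auto simp: t_def list_eq_iff_nth_eq)
  have "\<forall>i<n. t i \<in> R" using assms(6) by (simp add: t_def)
  with assms(1) show ?thesis unfolding Pol_def m[symmetric] by blast
qed

lemma AP_Pol: "AP n R S f \<Longrightarrow> Pol n R (prime_rel S) f"
  unfolding Pol_def
proof (intro allI impI)
  fix t :: "nat \<Rightarrow> tup4"
  assume ap: "AP n R S f" and t: "\<forall>i<n. t i \<in> R"
  let ?a = "map (\<lambda>i. fst (t i)) [0..<n]" and ?b = "map (\<lambda>i. fst (snd (t i))) [0..<n]"
  let ?c = "map (\<lambda>i. fst (snd (snd (t i)))) [0..<n]" and ?d = "map (\<lambda>i. snd (snd (snd (t i)))) [0..<n]"
  show "(f ?a, f ?b, f ?c, f ?d) \<in> prime_rel S"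
  proof (cases "\<exists>x. (f ?a, f ?b, f ?c, x) \<in> S")
    case True
    have "\<forall>i<n. (?a!i, ?b!i, ?c!i, ?d!i) \<in> R" using t by simp
    with True ap have "(f ?a, f ?b, f ?c, f ?d) \<in> S" unfolding AP_def by (metis length_map length_upt minus_nat.diff_0)
    then show ?thesis by (simp add: prime_rel_def)
  next
    case False
    then show ?thesis by (simp add: prime_rel_def)
  qed
qed

lemma I_AP: "in_I n f \<Longrightarrow> AP n R3 R3 f"
proof -
  assume "in_I n f"
  then consider v where "\<forall>x. length x = n \<longrightarrow> f x = v"
    | i where "i < n" "\<forall>x. length x = n \<longrightarrow> f x = x ! i"
    unfolding in_I_def by blast
  then show ?thesis
  proof cases
    case 1
    show ?thesis unfolding AP_def
    proof (intro allI impI)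
      fix a b c d :: "bool list"
      assume h: "length a = n \<and> length b = n \<and> length c = n \<and> length d = n \<and>
       (\<forall>i<n. (a ! i, b ! i, c ! i, d ! i) \<in> R3) \<and> (\<exists>x. (f a, f b, f c, x) \<in> R3)"
      then have "f a = v" "f b = v" "f c = v" "f d = v" using 1 by auto
      then show "(f a, f b, f c, f d) \<in> R3" by (cases v) (simp_all add: R3_iff)
    qed
  next
    case 2
    show ?thesis unfolding AP_def
    proof (intro allI impI)
      fix a b c d :: "bool list"
      assume h: "length a = n \<and> length b = n \<and> length c = n \<and> length d = n \<and>
       (\<forall>i<n. (a ! i, b ! i, c ! i, d ! i) \<in> R3) \<and> (\<exists>x. (f a, f b, f c, x) \<in> R3)"
      then have "f a = a!i" "f b = b!i" "f c = c!i" "f d = d!i" using 2 by auto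
      moreover have "(a ! i, b ! i, c ! i, d ! i) \<in> R3" using h 2 by blast
      ultimately show "(f a, f b, f c, f d) \<in> R3" by simp
    qed
  qed
qed

definition jn :: "bool list \<Rightarrow> bool list \<Rightarrow> bool list" where
  "jn x y = map2 (\<or>) x y"

definition ee :: "nat \<Rightarrow> nat \<Rightarrow> bool list" where
  "ee n i = map (\<lambda>k. k = i) [0..<n]"

lemma Pol_I:
  assumes P: "Pol n R3 (prime_rel R3) f"
  shows "in_I n f"
proof -
  let ?Z = "replicate n False" and ?O = "replicate n True"
  have lZ: "length ?Z = n" "length ?O = n" by auto
  have a1: "(f ?O, f ?Z, f ?O, f ?O) \<in> prime_rel R3"
    by (rule polD[OF P]) (auto simp: R3_iff)
  show ?thesis
  proof (cases "f ?Z")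
    case True
    then have fO: "f ?O" using a1 by (auto simp: R3'_iff)
    have "f x" if lx: "length x = n" for x
    proof (rule ccontr)
      assume nx: "\<not> f x"
      have "(f ?O, f (map Not x), f x, f ?Z) \<in> prime_rel R3"
        by (rule polD[OF P]) (use lx in \<open>auto simp: R3_iff\<close>)
      then have "\<not> f (map Not x)" using fO True nx by (auto simp: R3'_iff)
      moreover have "(f (map Not x), f x, f (map Not x), f ?O) \<in> prime_rel R3"
        by (rule polD[OF P]) (use lx in \<open>auto simp: R3_iff\<close>)
      ultimately show False using fO nx by (auto simp: R3'_iff)
    qed
    then show ?thesis unfolding in_I_def by blast
  next
    case False
    have join: "f (jn x y) = (f x \<or> f y)" if "length x = n" "length y = n" for x y
    proof -
      have "(f ?Z, f x, f y, f (jn x y)) \<in> prime_rel R3"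
        by (rule polD[OF P]) (use that in \<open>auto simp: R3_iff jn_def\<close>)
      then show ?thesis using False by (auto simp: R3'_iff)
    qed
    have mono: "f x \<Longrightarrow> f y" if "length x = n" "length y = n" "\<forall>i<n. x!i \<longrightarrow> y!i" for x y
    proof -
      have "jn x y = y" using that by (auto simp: jn_def list_eq_iff_nth_eq)
      then show "f x \<Longrightarrow> f y" using join[OF that(1,2)] by simp
    qed
    show ?thesis
    proof (cases "f ?O")
      case False
      have "\<not> f x" if "length x = n" for x
        using mono[of x ?O] that False by auto
      then show ?thesis unfolding in_I_def by blast
    next
      case True
      have neg: "f (map Not x) = (\<not> f x)" if lx: "length x = n" for x
      proof -
        have "(f ?O, f x, f (map Not x), f ?Z) \<in> prime_rel R3"
          by (rule polD[OF P]) (use lx in \<open>auto simp: R3_iff\<close>)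
        then have "\<not> (f x \<and> f (map Not x))" using True False by (auto simp: R3'_iff)
        moreover have "jn x (map Not x) = ?O" using lx by (auto simp: jn_def list_eq_iff_nth_eq)
        then have "f x \<or> f (map Not x)" using join[of x "map Not x"] lx True by simp
        ultimately show ?thesis by blast
      qed
      have lee: "length (ee n i) = n" for i by (simp add: ee_def)
      have find: "\<forall>x. length x = n \<longrightarrow> card {k. k < n \<and> x!k} = w \<longrightarrow> f x \<longrightarrow> (\<exists>i<n. f (ee n i))" for w
      proof (induction w rule: less_induct)
        case (less w)
        show ?case
        proof (intro allI impI)
          fix x assume lx: "length x = n" and cw: "card {k. k < n \<and> x!k} = w" and fx: "f x"
          show "\<exists>i<n. f (ee n i)"
          proof (cases "\<exists>i<n. x!i")
            case False
            then have "x = ?Z" using lx by (auto simp: list_eq_iff_nth_eq)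
            with fx \<open>\<not> f ?Z\<close> show ?thesis by simp
          next
            case True
            then obtain i where i: "i < n" "x!i" by blast
            let ?y = "x[i := False]"
            have ly: "length ?y = n" using lx by simp
            have "jn (ee n i) ?y = x" using lx i
              by (auto simp: jn_def ee_def list_eq_iff_nth_eq nth_list_update)
            then have "f (ee n i) \<or> f ?y" using join[OF lee[of i] ly] fx by simp
            then show ?thesis
            proof
              assume "f (ee n i)" then show ?thesis using i by blast
            next
              assume fy: "f ?y"
              have sub: "{k. k < n \<and> ?y!k} \<subset> {k. k < n \<and> x!k}"
                using i lx by (auto simp: nth_list_update split: if_splits)
              have "card {k. k < n \<and> ?y!k} < w"
                using psubset_card_mono[OF _ sub] cw by simp
              with less.IH ly fy show ?thesis by blast
            qed
          qed
        qed
      qed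
      obtain i where i: "i < n" "f (ee n i)" using find[of "card {k. k < n \<and> ?O!k}"] True lZ by blast
      have "f y = y!i" if ly: "length y = n" for y
      proof (cases "y!i")
        case True
        then show ?thesis using mono[OF lee ly, of i] i by (auto simp: ee_def)
      next
        case False
        have "f (map Not y)" using mono[OF lee, of "map Not y" i] i ly False by (auto simp: ee_def)
        then show ?thesis using neg[OF ly] False by simp
      qed
      then show ?thesis unfolding in_I_def using i by blast
    qed
  qed
qed

theorem mainTheorem9:
  shows "\<forall>n f. (AP n R3 R3 f \<longleftrightarrow> Pol n R3 (prime_rel R3) f)
              \<and> (Pol n R3 (prime_rel R3) f \<longleftrightarrow> in_I n f)"
  using AP_Pol Pol_I I_AP by blast

end
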